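(* Let $G$ be an ordered graph, and let $S,T\subseteq E(G)$ with $|S|>|T|$. Then there is an edge $e\in S\setminus T$ with $$\mathrm{h}_{G\setminus T}(e)\ge \min_{f\in S}\mathrm{h}_G(f).$$
   Context: An ordered graph is a finite simple graph $G$ equipped with a total order $\le_G$ on $E(G)$ and a total order $\le^V_G$ on $V(G)$; subgraphs inherit these orders. Let $\mathbb N=\{1,2,\dots\}$. Define $\preceq_{\mathrm{lex}}$ on $\mathbb N\times V(G)$ by $(i,v)\preceq_{\mathrm{lex}}(i',v')$ iff $i<i'$, or $i=i'$ and $v\le^V_G v'$. The height table $\mathrm{HT}(G)$ is a partially filled array indexed by $\mathbb N\times V(G)$, built by going through all $(i,v)$ in $\preceq_{\mathrm{lex}}$-increasing order and setting the entry at $(i,v)$ to be the $\le_G$-largest edge containing $v$ not yet entered into the table (blank if none remain). Every edge is entered exactly once; $\mathrm{ht}_G(e)=(\mathrm{h}_G(e),\mathrm{v}_G(e))$ is the position of $e$, with $\mathrm{h}_G(e)$ its row (height) and $\mathrm{v}_G(e)$ its column. $G\setminus T$ denotes the graph on $V(G)$ with edge set $E(G)\setminus T$. *)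

theory Defs
  imports Main
begin

text \<open>An ordered graph: finite vertex set V (vertex order = the linear order of the
 vertex type 'v), edge set E of 2-element subsets of V, and a total order R on E
 (given as a relation, (f,e) \<in> R meaning f \<le> e).  Subgraphs inherit both orders.\<close>

definition simple_graph :: "'v set \<Rightarrow> 'v set set \<Rightarrow> bool" where
  "simple_graph V E \<longleftrightarrow> finite V \<and> (\<forall>e\<in>E. e \<subseteq> V \<and> card e = 2)"

definition ordered_graph :: "'v set \<Rightarrow> 'v set set \<Rightarrow> ('v set \<times> 'v set) set \<Rightarrow> bool" where
  "ordered_graph V E R \<longleftrightarrow> simple_graph V E \<and> linear_order_on E R"

definition rmax :: "('a \<times> 'a) set \<Rightarrow> 'a set \<Rightarrow> 'a" where
  "rmax R C = (THE e. e \<in> C \<and> (\<forall>f\<in>C. (f, e) \<in> R))"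

text \<open>The state is the set of
 edges not yet entered together with the partial table: edge \<mapsto> position (row, column).\<close>
fun ht_row :: "('v set \<times> 'v set) set \<Rightarrow> nat \<Rightarrow> 'v list \<Rightarrow>
    'v set set \<times> ('v set \<Rightarrow> (nat \<times> 'v) option) \<Rightarrow>
    'v set set \<times> ('v set \<Rightarrow> (nat \<times> 'v) option)" where
  "ht_row R i [] st = st"
| "ht_row R i (v # vs) (Rem, tab) =
     (if {e \<in> Rem. v \<in> e} = {} then ht_row R i vs (Rem, tab)
      else (let e = rmax R {e \<in> Rem. v \<in> e}
            in ht_row R i vs (Rem - {e}, tab(e \<mapsto> (i, v)))))"

fun ht_state :: "'v::linorder set \<Rightarrow> 'v set set \<Rightarrow> ('v set \<times> 'v set) set \<Rightarrow> nat \<Rightarrow>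
    'v set set \<times> ('v set \<Rightarrow> (nat \<times> 'v) option)" where
  "ht_state V E R 0 = (E, Map.empty)"
| "ht_state V E R (Suc n) = ht_row R (Suc n) (sorted_list_of_set V) (ht_state V E R n)"

text \<open>Position ht_G(e) = (h_G(e), v_G(e)) of the edge e in the height table.\<close>
definition ht :: "'v::linorder set \<Rightarrow> 'v set set \<Rightarrow> ('v set \<times> 'v set) set \<Rightarrow> 'v set \<Rightarrow> nat \<times> 'v" where
  "ht V E R e = (THE p. \<exists>n. \<forall>m\<ge>n. snd (ht_state V E R m) e = Some p)"

definition height :: "'v::linorder set \<Rightarrow> 'v set set \<Rightarrow> ('v set \<times> 'v set) set \<Rightarrow> 'v set \<Rightarrow> nat" where
  "height V E R e = fst (ht V E R e)"

end

theory Submission imports Defs begin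


lemma lin_facts:
  assumes "linear_order_on E R"
  shows "\<And>x. x \<in> E \<Longrightarrow> (x,x) \<in> R" "trans R" "antisym R"
    "\<And>x y. x \<in> E \<Longrightarrow> y \<in> E \<Longrightarrow> (x,y) \<in> R \<or> (y,x) \<in> R"
  using assms unfolding linear_order_on_def partial_order_on_def preorder_on_def refl_on_def total_on_def
  by metis+

lemma max_exists:
  assumes "linear_order_on E R" "finite C" "C \<noteq> {}" "C \<subseteq> E"
  shows "\<exists>e\<in>C. \<forall>f\<in>C. (f, e) \<in> R"
  using assms(2,3,4)
proof (induction C rule: finite_ne_induct)
  case (singleton x)
  then show ?case using lin_facts(1)[OF assms(1)] by auto
next
  case (insert x F)
  then obtain e where e: "e \<in> F" "\<forall>f\<in>F. (f, e) \<in> R" by auto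
  have xE: "x \<in> E" "e \<in> E" using insert e by auto
  show ?case
  proof (cases "(x,e) \<in> R")
    case True then show ?thesis using e by auto
  next
    case False
    then have "(e,x) \<in> R" using lin_facts(4)[OF assms(1) xE] by auto
    then show ?thesis using e lin_facts(1,2)[OF assms(1)] xE
      by (metis insert_iff transE)
  qed
qed

lemma rmax_prop:
  assumes "linear_order_on E R" "finite C" "C \<noteq> {}" "C \<subseteq> E"
  shows "rmax R C \<in> C \<and> (\<forall>f\<in>C. (f, rmax R C) \<in> R)"
proof -
  obtain e where e: "e \<in> C" "\<forall>f\<in>C. (f, e) \<in> R" using max_exists[OF assms] by blast
  have "rmax R C = e" unfolding rmax_def
  proof (rule the_equality)
    show "e \<in> C \<and> (\<forall>f\<in>C. (f, e) \<in> R)" using e by auto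
    fix e' assume "e' \<in> C \<and> (\<forall>f\<in>C. (f, e') \<in> R)"
    then show "e' = e" using e lin_facts(3)[OF assms(1)] by (auto dest: antisymD)
  qed
  then show ?thesis using e by auto
qed

lemma rmax_sub:
  assumes "linear_order_on E R" "finite C" "C \<subseteq> E" "C' \<subseteq> C" "rmax R C \<in> C'"
  shows "rmax R C' = rmax R C"
proof -
  have "C \<noteq> {}" using assms by auto
  note m = rmax_prop[OF assms(1,2) this assms(3)]
  show ?thesis unfolding rmax_def[of R C']
  proof (rule the_equality)
    show "rmax R C \<in> C' \<and> (\<forall>f\<in>C'. (f, rmax R C) \<in> R)" using m assms by auto
    fix e' assume "e' \<in> C' \<and> (\<forall>f\<in>C'. (f, e') \<in> R)"
    then show "e' = rmax R C" using m assms lin_facts(3)[OF assms(1)] by (meson antisymD subsetD)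
  qed
qed

lemma row_basic:
  assumes "linear_order_on E R" "finite Rem" "Rem \<subseteq> E"
  shows "fst (ht_row R i vs (Rem, tab)) \<subseteq> Rem \<and>
    (\<forall>e. e \<notin> Rem - fst (ht_row R i vs (Rem, tab)) \<longrightarrow> snd (ht_row R i vs (Rem, tab)) e = tab e) \<and>
    (\<forall>e \<in> Rem - fst (ht_row R i vs (Rem, tab)). \<exists>v. snd (ht_row R i vs (Rem, tab)) e = Some (i, v))"
  using assms(2,3)
proof (induction vs arbitrary: Rem tab)
  case Nil
  then show ?case by simp
next
  case (Cons v vs)
  show ?case
  proof (cases "{e \<in> Rem. v \<in> e} = {}")
    case True
    then show ?thesis using Cons.IH[OF Cons.prems] by simp
  next
    case False
    define e where "e = rmax R {e \<in> Rem. v \<in> e}"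
    have eR: "e \<in> Rem" using rmax_prop[OF assms(1) _ False] Cons.prems unfolding e_def by auto
    have eq: "ht_row R i (v # vs) (Rem, tab) = ht_row R i vs (Rem - {e}, tab(e \<mapsto> (i, v)))"
      unfolding ht_row.simps(2) e_def Let_def using False by (simp only: if_False)
    have IH: "fst (ht_row R i vs (Rem - {e}, tab(e \<mapsto> (i, v)))) \<subseteq> Rem - {e} \<and>
    (\<forall>x. x \<notin> (Rem - {e}) - fst (ht_row R i vs (Rem - {e}, tab(e \<mapsto> (i, v)))) \<longrightarrow> snd (ht_row R i vs (Rem - {e}, tab(e \<mapsto> (i, v)))) x = (tab(e \<mapsto> (i, v))) x) \<and>
    (\<forall>x \<in> (Rem - {e}) - fst (ht_row R i vs (Rem - {e}, tab(e \<mapsto> (i, v)))). \<exists>w. snd (ht_row R i vs (Rem - {e}, tab(e \<mapsto> (i, v)))) x = Some (i, w))"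
      by (rule Cons.IH) (use Cons.prems in auto)
    define Rm where "Rm = fst (ht_row R i vs (Rem - {e}, tab(e \<mapsto> (i, v))))"
    define Tb where "Tb = snd (ht_row R i vs (Rem - {e}, tab(e \<mapsto> (i, v))))"
    have I1: "Rm \<subseteq> Rem - {e}" and I2: "\<And>x. x \<notin> (Rem - {e}) - Rm \<Longrightarrow> Tb x = (tab(e \<mapsto> (i, v))) x"
      and I3: "\<And>x. x \<in> (Rem - {e}) - Rm \<Longrightarrow> \<exists>w. Tb x = Some (i, w)"
      using IH unfolding Rm_def Tb_def by auto
    have "Rm \<subseteq> Rem" using I1 by auto
    moreover have "\<forall>x. x \<notin> Rem - Rm \<longrightarrow> Tb x = tab x"
    proof (intro allI impI)
      fix x assume "x \<notin> Rem - Rm"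
      then have "x \<noteq> e" "x \<notin> (Rem - {e}) - Rm" using I1 eR by auto
      then show "Tb x = tab x" using I2 by simp
    qed
    moreover have "\<forall>x\<in>Rem - Rm. \<exists>w. Tb x = Some (i, w)"
    proof
      fix x assume x: "x \<in> Rem - Rm"
      show "\<exists>w. Tb x = Some (i, w)"
      proof (cases "x = e")
        case True
        then have "x \<notin> (Rem - {e}) - Rm" by auto
        then show ?thesis using I2 True by simp
      next
        case False
        then show ?thesis using I3 x by auto
      qed
    qed
    ultimately show ?thesis unfolding eq Rm_def[symmetric] Tb_def[symmetric] by simp
  qed
qed


lemma row_step:
  assumes "{e \<in> Rem. v \<in> e} \<noteq> {}"
  shows "ht_row R i (v # vs) (Rem, tab) = ht_row R i vs (Rem - {rmax R {e \<in> Rem. v \<in> e}}, tab(rmax R {e \<in> Rem. v \<in> e} \<mapsto> (i, v)))"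
  unfolding ht_row.simps(2) Let_def using assms by (simp only: if_False)

lemma row_nostep:
  assumes "{e \<in> Rem. v \<in> e} = {}"
  shows "ht_row R i (v # vs) (Rem, tab) = ht_row R i vs (Rem, tab)"
  using assms by simp

lemma row_progress:
  assumes "linear_order_on E R" "finite Rem" "Rem \<subseteq> E" "e \<in> Rem" "v \<in> set vs" "v \<in> e"
  shows "fst (ht_row R i vs (Rem, tab)) \<noteq> Rem"
  using assms(2-6)
proof (induction vs arbitrary: Rem tab e)
  case Nil
  then show ?case by simp
next
  case (Cons w vs)
  show ?case
  proof (cases "{e \<in> Rem. w \<in> e} = {}")
    case True
    then have "v \<in> set vs" using Cons.prems by auto
    then show ?thesis using Cons.IH[OF Cons.prems(1,2,3)] Cons.prems True by (simp add: row_nostep)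
  next
    case False
    define m where "m = rmax R {e \<in> Rem. w \<in> e}"
    have eR: "m \<in> Rem" using rmax_prop[OF assms(1) _ False] Cons.prems unfolding m_def by auto
    have pre: "finite (Rem - {m})" "Rem - {m} \<subseteq> E" using Cons.prems by auto
    have "fst (ht_row R i vs (Rem - {m}, tab(m \<mapsto> (i, w)))) \<subseteq> Rem - {m}"
      using row_basic[OF assms(1) pre] by blast
    then show ?thesis using eR unfolding row_step[OF False] m_def[symmetric] by auto
  qed
qed

lemma row_cmp:
  assumes "linear_order_on E R" "finite Rem" "Rem \<subseteq> E"
  shows "\<exists>z. fst (ht_row R i vs (Rem - {y}, tab2)) = fst (ht_row R i vs (Rem, tab)) - {z}"
  using assms(2,3)
proof (induction vs arbitrary: Rem y tab tab2)
  case Nil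
  then show ?case by auto
next
  case (Cons v vs)
  have C': "{e \<in> Rem - {y}. v \<in> e} = {e \<in> Rem. v \<in> e} - {y}" by auto
  show ?case
  proof (cases "{e \<in> Rem. v \<in> e} = {}")
    case True
    then have "{e \<in> Rem - {y}. v \<in> e} = {}" using C' by auto
    then show ?thesis using Cons.IH[OF Cons.prems] True by (simp add: row_nostep)
  next
    case False
    define e where "e = rmax R {e \<in> Rem. v \<in> e}"
    have em: "e \<in> {e \<in> Rem. v \<in> e}" using rmax_prop[OF assms(1) _ False] Cons.prems unfolding e_def by auto
    have pre: "finite (Rem - {e})" "Rem - {e} \<subseteq> E" using Cons.prems by auto
    note R1 = row_step[OF False, of R i vs tab, folded e_def]
    show ?thesis
    proof (cases "e = y")
      case False
      then have ne: "{e \<in> Rem - {y}. v \<in> e} \<noteq> {}" using em by auto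
      have "rmax R {e \<in> Rem - {y}. v \<in> e} = e" unfolding e_def
        by (rule rmax_sub[OF assms(1)]) (use Cons.prems em False in \<open>auto simp: e_def\<close>)
      then have R2: "ht_row R i (v # vs) (Rem - {y}, tab2) = ht_row R i vs (Rem - {y} - {e}, tab2(e \<mapsto> (i, v)))"
        using row_step[OF ne, of R i vs tab2] by simp
      have "Rem - {y} - {e} = Rem - {e} - {y}" by auto
      then show ?thesis unfolding R1 R2 using Cons.IH[OF pre] by metis
    next
      case True
      show ?thesis
      proof (cases "{e \<in> Rem - {y}. v \<in> e} = {}")
        case True2: True
        have R2: "ht_row R i (v # vs) (Rem - {y}, tab2) = ht_row R i vs (Rem - {y}, tab2)"
          using row_nostep[OF True2] .
        have "Rem - {y} = Rem - {e} - {y}" using True by auto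
        then show ?thesis unfolding R1 R2 using Cons.IH[OF pre] by metis
      next
        case False2: False
        define z where "z = rmax R {e \<in> Rem - {y}. v \<in> e}"
        note R2 = row_step[OF False2, of R i vs tab2, folded z_def]
        have pre2: "finite (Rem - {y})" "Rem - {y} \<subseteq> E" using Cons.prems by auto
        have "Rem - {e} = Rem - {y}" using True by auto
        then show ?thesis unfolding R1 R2 using Cons.IH[OF pre2] by metis
      qed
    qed
  qed
qed


context
  fixes V :: "'v::linorder set" and E F :: "'v set set" and R
  assumes lin: "linear_order_on E R" and FE: "F \<subseteq> E" and finF: "finite F" and finV: "finite V"
    and edges: "\<forall>e\<in>F. e \<subseteq> V \<and> e \<noteq> {}"
begin

abbreviation "Rs n \<equiv> fst (ht_state V F R n)"
abbreviation "Ts n \<equiv> snd (ht_state V F R n)"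

lemma st_sub: "Rs n \<subseteq> F"
proof (induction n)
  case 0 then show ?case by simp
next
  case (Suc n)
  obtain Rem tab where p: "ht_state V F R n = (Rem, tab)" by (cases "ht_state V F R n")
  have "Rem \<subseteq> F" using Suc p by simp
  then have "finite Rem" "Rem \<subseteq> E" using finF FE finite_subset by auto
  then have "fst (ht_row R (Suc n) (sorted_list_of_set V) (Rem, tab)) \<subseteq> Rem"
    using row_basic[OF lin] by blast
  then show ?case using p \<open>Rem \<subseteq> F\<close> by simp
qed

lemma st_step: "Rs (Suc n) \<subseteq> Rs n \<and> (\<forall>e. e \<notin> Rs n - Rs (Suc n) \<longrightarrow> Ts (Suc n) e = Ts n e)
   \<and> (\<forall>e\<in>Rs n - Rs (Suc n). \<exists>v. Ts (Suc n) e = Some (Suc n, v))"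
proof -
  obtain Rem tab where p: "ht_state V F R n = (Rem, tab)" by (cases "ht_state V F R n")
  have "Rem \<subseteq> F" using st_sub[of n] p by simp
  then have "finite Rem" "Rem \<subseteq> E" using finF FE finite_subset by auto
  from row_basic[OF lin this, of "Suc n" "sorted_list_of_set V" tab]
  show ?thesis using p by simp
qed

lemma st_progress: "Rs n \<noteq> {} \<Longrightarrow> Rs (Suc n) \<noteq> Rs n"
proof -
  assume ne: "Rs n \<noteq> {}"
  obtain Rem tab where p: "ht_state V F R n = (Rem, tab)" by (cases "ht_state V F R n")
  have "Rem \<subseteq> F" using st_sub[of n] p by simp
  then have fr: "finite Rem" "Rem \<subseteq> E" using finF FE finite_subset by auto
  obtain e where e: "e \<in> Rem" using ne p by auto
  then obtain v where v: "v \<in> e" "v \<in> V" using edges \<open>Rem \<subseteq> F\<close> by blast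
  then have "v \<in> set (sorted_list_of_set V)" using finV by simp
  from row_progress[OF lin fr e this v(1)]
  show ?thesis using p by simp
qed

lemma st_mono: "m \<le> n \<Longrightarrow> Rs n \<subseteq> Rs m"
  by (rule lift_Suc_antimono_le[of Rs]) (use st_step in auto)

lemma st_card: "card (Rs n) \<le> card F - n"
proof (induction n)
  case 0 then show ?case using st_sub[of 0] by simp
next
  case (Suc n)
  show ?case
  proof (cases "Rs n = {}")
    case True
    then show ?thesis using st_step[of n] by simp
  next
    case False
    have "Rs (Suc n) \<subset> Rs n" using st_step[of n] st_progress[OF False] by auto
    moreover have "finite (Rs n)" using st_sub finF finite_subset by blast
    ultimately have "card (Rs (Suc n)) < card (Rs n)" by (rule psubset_card_mono[rotated])
    then show ?thesis using Suc by simp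
  qed
qed

lemma st_empty: "Rs (card F) = {}"
proof -
  have "card (Rs (card F)) = 0" using st_card[of "card F"] by simp
  moreover have "finite (Rs (card F))" using st_sub finF finite_subset by blast
  ultimately show ?thesis by simp
qed

lemma st_stable: assumes "e \<notin> Rs n" "n \<le> m" shows "Ts m e = Ts n e"
  using assms(2)
proof (induction m rule: dec_induct)
  case base then show ?case by simp
next
  case (step m)
  have "e \<notin> Rs m" using st_mono[OF step.hyps(1)] assms(1) by auto
  then show ?case using st_step[of m] step.IH by auto
qed

lemma first_out: "e \<in> Rs 0 \<Longrightarrow> e \<notin> Rs N \<Longrightarrow> \<exists>j. 0 < j \<and> e \<in> Rs (j - 1) \<and> e \<notin> Rs j"
proof (induction N)
  case 0 then show ?case by simp
next
  case (Suc N)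
  then show ?case by (cases "e \<in> Rs N") (auto intro: exI[of _ "Suc N"])
qed

lemma ht_val: assumes "e \<in> F"
  shows "\<exists>j v. 0 < j \<and> e \<in> Rs (j - 1) \<and> e \<notin> Rs j \<and> ht V F R e = (j, v)"
proof -
  obtain j where j: "0 < j" "e \<in> Rs (j - 1)" "e \<notin> Rs j"
    using first_out[of e "card F"] st_empty assms by auto
  obtain v where v: "Ts j e = Some (j, v)"
  proof -
    have "e \<in> Rs (j - 1) - Rs (Suc (j - 1))" using j by simp
    then have "\<exists>v. Ts (Suc (j - 1)) e = Some (Suc (j - 1), v)" using st_step[of "j - 1"] by blast
    then show ?thesis using j(1) that by auto
  qed
  have all: "\<forall>m\<ge>j. Ts m e = Some (j, v)" using st_stable[OF j(3)] v by auto
  have "ht V F R e = (j, v)" unfolding ht_def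
  proof (rule the_equality)
    show "\<exists>n. \<forall>m\<ge>n. Ts m e = Some (j, v)" using all by blast
    fix p assume "\<exists>n. \<forall>m\<ge>n. Ts m e = Some p"
    then obtain n where "\<forall>m\<ge>n. Ts m e = Some p" by blast
    then have "Ts (max n j) e = Some p" by simp
    moreover have "Ts (max n j) e = Some (j, v)" using all by simp
    ultimately show "p = (j, v)" by simp
  qed
  then show ?thesis using j by blast
qed

lemma height_iff: assumes "e \<in> F"
  shows "height V F R e \<le> k \<longleftrightarrow> e \<notin> Rs k"
proof -
  obtain j v where j: "0 < j" "e \<in> Rs (j - 1)" "e \<notin> Rs j" "ht V F R e = (j, v)"
    using ht_val[OF assms] by blast
  have h: "height V F R e = j" using j(4) by (simp add: height_def)
  show ?thesis
  proof
    assume "height V F R e \<le> k"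
    then show "e \<notin> Rs k" using st_mono[of j k] j h by auto
  next
    assume "e \<notin> Rs k"
    show "height V F R e \<le> k"
    proof (rule ccontr)
      assume "\<not> height V F R e \<le> k"
      then have "k \<le> j - 1" using h by simp
      then show False using st_mono[of k "j - 1"] j \<open>e \<notin> Rs k\<close> by auto
    qed
  qed
qed

end


definition NN :: "'v::linorder set \<Rightarrow> 'v set set \<Rightarrow> ('v set \<times> 'v set) set \<Rightarrow> nat \<Rightarrow> 'v set set" where
  "NN V F R k = F - fst (ht_state V F R k)"

lemma rem_cmp:
  assumes lin: "linear_order_on E R" and FE: "F \<subseteq> E" and finF: "finite F" and finV: "finite V"
    and edges: "\<forall>e\<in>F. e \<subseteq> V \<and> e \<noteq> {}"
  shows "\<exists>y. fst (ht_state V (F - {t}) R k) = fst (ht_state V F R k) - {y}"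
proof (induction k)
  case 0 then show ?case by auto
next
  case (Suc n)
  then obtain y where y: "fst (ht_state V (F - {t}) R n) = fst (ht_state V F R n) - {y}" by blast
  obtain Rem tab where p: "ht_state V F R n = (Rem, tab)" by (cases "ht_state V F R n")
  obtain Rem2 tab2 where p2: "ht_state V (F - {t}) R n = (Rem2, tab2)" by (cases "ht_state V (F - {t}) R n")
  have "Rem \<subseteq> F" using st_sub[OF lin FE finF finV edges, of n] p by simp
  then have fr: "finite Rem" "Rem \<subseteq> E" using finF FE finite_subset by auto
  have "Rem2 = Rem - {y}" using y p p2 by simp
  then show ?case using p p2 row_cmp[OF lin fr, of "Suc n" "sorted_list_of_set V" y tab2 tab] by simp
qed

lemma N_remove:
  assumes lin: "linear_order_on E R" and FE: "F \<subseteq> E" and finF: "finite F" and finV: "finite V"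
    and edges: "\<forall>e\<in>F. e \<subseteq> V \<and> e \<noteq> {}" and tF: "t \<in> F"
  shows "\<exists>y. NN V (F - {t}) R k \<subseteq> (NN V F R k - {t}) \<union> {y} \<and> (t \<notin> NN V F R k \<longrightarrow> NN V (F - {t}) R k \<subseteq> NN V F R k)"
proof -
  obtain y where y: "fst (ht_state V (F - {t}) R k) = fst (ht_state V F R k) - {y}"
    using rem_cmp[OF assms(1-5)] by blast
  have s2: "fst (ht_state V (F - {t}) R k) \<subseteq> F - {t}"
    using st_sub[of E R "F - {t}" V k] assms by auto
  show ?thesis
  proof (intro exI conjI impI)
    show "NN V (F - {t}) R k \<subseteq> (NN V F R k - {t}) \<union> {y}" unfolding NN_def using y by auto
    assume "t \<notin> NN V F R k"
    then have "t \<in> fst (ht_state V F R k)" using tF unfolding NN_def by auto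
    then have "y = t" using y s2 by auto
    then show "NN V (F - {t}) R k \<subseteq> NN V F R k" unfolding NN_def using y by auto
  qed
qed

lemma count_lemma:
  assumes lin: "linear_order_on E R" and finE: "finite E" and finV: "finite V"
    and edges: "\<forall>e\<in>E. e \<subseteq> V \<and> e \<noteq> {}" and finS: "finite S"
  shows "finite T \<Longrightarrow> T \<subseteq> E \<Longrightarrow> card (S \<inter> NN V (E - T) R k) \<le> card (S \<inter> NN V E R k) + card (T - S)"
proof (induction T rule: finite_induct)
  case empty then show ?case by simp
next
  case (insert t T0)
  define F where "F = E - T0"
  have FE: "F \<subseteq> E" and finF: "finite F" and eF: "\<forall>e\<in>F. e \<subseteq> V \<and> e \<noteq> {}" and tF: "t \<in> F"
    using finE edges insert unfolding F_def by auto
  have eq: "E - insert t T0 = F - {t}" unfolding F_def by auto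
  have IH: "card (S \<inter> NN V F R k) \<le> card (S \<inter> NN V E R k) + card (T0 - S)"
    using insert unfolding F_def by auto
  obtain y where y: "NN V (F - {t}) R k \<subseteq> (NN V F R k - {t}) \<union> {y}"
    "t \<notin> NN V F R k \<longrightarrow> NN V (F - {t}) R k \<subseteq> NN V F R k"
    using N_remove[OF lin FE finF finV eF tF] by blast
  have finN: "finite (S \<inter> NN V F R k)" using finS by simp
  have cT: "card (insert t T0 - S) = (if t \<in> S then card (T0 - S) else Suc (card (T0 - S)))"
    using insert by (auto simp: insert_Diff_if)
  show ?case unfolding eq
  proof (cases "t \<in> NN V F R k")
    case False
    then have "card (S \<inter> NN V (F - {t}) R k) \<le> card (S \<inter> NN V F R k)"
      using y(2) finN by (intro card_mono) auto
    then show "card (S \<inter> NN V (F - {t}) R k) \<le> card (S \<inter> NN V E R k) + card (insert t T0 - S)"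
      using IH cT by (auto split: if_splits)
  next
    case True
    have sub: "S \<inter> NN V (F - {t}) R k \<subseteq> insert y (S \<inter> NN V F R k - {t})" using y(1) by auto
    have "card (S \<inter> NN V (F - {t}) R k) \<le> card (insert y (S \<inter> NN V F R k - {t}))"
      using finN sub by (intro card_mono) auto
    also have "\<dots> \<le> Suc (card (S \<inter> NN V F R k - {t}))" using finN by (simp add: card_insert_le_m1)
    finally have c1: "card (S \<inter> NN V (F - {t}) R k) \<le> Suc (card (S \<inter> NN V F R k - {t}))" .
    show "card (S \<inter> NN V (F - {t}) R k) \<le> card (S \<inter> NN V E R k) + card (insert t T0 - S)"
    proof (cases "t \<in> S")
      case True
      then have "card (S \<inter> NN V F R k - {t}) = card (S \<inter> NN V F R k) - 1"
        "card (S \<inter> NN V F R k) > 0"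
        using finN \<open>t \<in> NN V F R k\<close> by (auto simp: card_gt_0_iff)
      then show ?thesis using c1 IH cT True by simp
    next
      case False
      then have "card (S \<inter> NN V F R k - {t}) = card (S \<inter> NN V F R k)" by simp
      then show ?thesis using c1 IH cT False by simp
    qed
  qed
qed

theorem lemma3p2:
  fixes V :: "'v::linorder set" and E S T :: "'v set set"
    and R :: "('v set \<times> 'v set) set"
  assumes "ordered_graph V E R"
    and "S \<subseteq> E" and "T \<subseteq> E"
    and "card S > card T"
  shows "\<exists>e\<in>S - T. height V (E - T) R e \<ge> Min (height V E R ` S)"
proof (rule ccontr)
  assume neg: "\<not> ?thesis"
  have lin: "linear_order_on E R" and finV: "finite V" and eV: "\<forall>e\<in>E. e \<subseteq> V \<and> card e = 2"
    using assms(1) unfolding ordered_graph_def simple_graph_def by auto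
  have edges: "\<forall>e\<in>E. e \<subseteq> V \<and> e \<noteq> {}" using eV by fastforce
  have "E \<subseteq> Pow V" using eV by auto
  then have finE: "finite E" using finV finite_subset by blast
  have finS: "finite S" and finT: "finite T" using finE assms(2,3) finite_subset by auto
  have cardST: "card S = card (S - T) + card (S \<inter> T)" "card T = card (T - S) + card (S \<inter> T)"
    using finS finT
    by (metis Int_Diff_disjoint Int_commute Un_Diff_Int card_Un_disjoint finite_Diff finite_Int)+
  then have "card (S - T) > card (T - S)" using assms(4) by simp
  then obtain e0 where e0: "e0 \<in> S - T" by (metis all_not_in_conv card.empty not_less0)
  define k0 where "k0 = Min (height V E R ` S)"
  have lt: "\<forall>e\<in>S - T. height V (E - T) R e < k0" using neg unfolding k0_def using not_le by blast
  then have "k0 > 0" using e0 by fastforce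
  define k where "k = k0 - 1"
  have finET: "finite (E - T)" and ET: "E - T \<subseteq> E" and eET: "\<forall>e\<in>E - T. e \<subseteq> V \<and> e \<noteq> {}"
    using finE edges by auto
  have "S \<inter> NN V E R k = {}"
  proof -
    { fix s assume s: "s \<in> S"
      have "k0 \<le> height V E R s" unfolding k0_def using finS s by simp
      then have "\<not> height V E R s \<le> k" using \<open>k0 > 0\<close> unfolding k_def by simp
      then have "s \<in> fst (ht_state V E R k)"
        using height_iff[OF lin subset_refl finE finV edges] s assms(2) by blast }
    then show ?thesis unfolding NN_def by auto
  qed
  moreover have "S - T \<subseteq> S \<inter> NN V (E - T) R k"
  proof
    fix e assume e: "e \<in> S - T"
    then have "height V (E - T) R e < k0" using lt by blast
    then have "height V (E - T) R e \<le> k" unfolding k_def by linarith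
    then have "e \<notin> fst (ht_state V (E - T) R k)"
      using height_iff[OF lin ET finET finV eET] e assms(2) by blast
    then show "e \<in> S \<inter> NN V (E - T) R k" using e assms(2) unfolding NN_def by auto
  qed
  ultimately have "card (S - T) \<le> card (T - S)"
    using count_lemma[OF lin finE finV edges finS finT assms(3), of k] card_mono[of "S \<inter> NN V (E - T) R k" "S - T"] finS
    by simp
  then show False using \<open>card (S - T) > card (T - S)\<close> by simp
qed

end
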